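(* Let $T>0$, $\alpha\in(0,1)$, $f\in USC([0,T])$ (resp. $f\in LSC([0,T])$) and $g\in C^1((0,T])$. Then: (i) for each $t\in(0,T]$, $J_r[g](t)$ exists for all $r\in(0,t)$; (ii) for each $t\in(0,T]$, $K_r[f](t)$ makes sense and is bounded from below (resp. from above) for all $r\in(0,t)$; (iii) if $f-g$ attains its maximum (resp. minimum) over $(0,T]$ at $\hat t\in(0,T]$, then $K_0[f](\hat t)$ makes sense and is bounded from below (resp. from above). Moreover, (iv) let $t_j\in(0,T]$, $r_j\in(0,t_j)$, $\alpha_j\in(0,1)$ ($j\ge0$) be sequences with $(t_j,r_j,\alpha_j)\to(\hat t,\hat r,\alpha)\in(0,T]\times[0,\hat t)\times(0,1)$, and let $J^{\alpha_j}_r$ denote $J_r$ with $\alpha$ replaced by $\alpha_j$. Then $\lim_{j\to\infty}J^{\alpha_j}_{r_j}[g](t_j)=J^{\alpha}_{\hat r}[g](\hat t)$.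
   Context: For measurable $f:[0,T]\to\mathbb{R}$, $t\in(0,T]$ and $r\in[0,t]$: $J_r[f](t)=\frac{\alpha}{\Gamma(1-\alpha)}\int_0^r (f(t)-f(t-\tau))\frac{d\tau}{\tau^{\alpha+1}}$, $K_r[f](t)=\frac{f(t)-f(0)}{t^\alpha\Gamma(1-\alpha)}+\frac{\alpha}{\Gamma(1-\alpha)}\int_r^t (f(t)-f(t-\tau))\frac{d\tau}{\tau^{\alpha+1}}$. Integrals whose lower limit is $0$ are improper: $\int_0^b=\lim_{\rho\searrow0}\int_\rho^b$. For an integrand $h(\tau)$, the integral $\int h\,\tau^{-\alpha-1}d\tau$ "makes sense" if at least one of the integrals of $h^+=\max\{h,0\}$, $h^-=\max\{-h,0\}$ is finite, and "exists" if both are finite (for improper integrals: the truncated integrals of $h^\pm$ are finite for each lower limit $\rho>0$ and their limits as $\rho\searrow0$ are finite). The same terminology is used for $K_r$, which contains an additional non-integral term. $J_0\equiv0$. *)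

theory Defs
  imports "HOL-Analysis.Analysis"
begin

definition usc_on :: "real set \<Rightarrow> (real \<Rightarrow> real) \<Rightarrow> bool" where
  "usc_on S f \<longleftrightarrow> (\<forall>x\<in>S. \<forall>a. f x < a \<longrightarrow> (\<forall>\<^sub>F y in at x within S. f y < a))"

definition lsc_on :: "real set \<Rightarrow> (real \<Rightarrow> real) \<Rightarrow> bool" where
  "lsc_on S f \<longleftrightarrow> (\<forall>x\<in>S. \<forall>a. a < f x \<longrightarrow> (\<forall>\<^sub>F y in at x within S. a < f y))"

definition C1_on :: "real set \<Rightarrow> (real \<Rightarrow> real) \<Rightarrow> bool" where
  "C1_on S g \<longleftrightarrow> (\<exists>g'. continuous_on S g' \<and>
      (\<forall>t\<in>S. (g has_real_derivative g' t) (at t within S)))"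

definition wint :: "real \<Rightarrow> (real \<Rightarrow> real) \<Rightarrow> real \<Rightarrow> real \<Rightarrow> ennreal" where
  "wint \<alpha> h a b = (\<integral>\<^sup>+ \<tau>\<in>{a..b}. ennreal (max (h \<tau>) 0 * \<tau> powr (-\<alpha>-1)) \<partial>lborel)"

definition prop_makes_sense :: "real \<Rightarrow> (real \<Rightarrow> real) \<Rightarrow> real \<Rightarrow> real \<Rightarrow> bool" where
  "prop_makes_sense \<alpha> h a b \<longleftrightarrow> set_borel_measurable lborel {a..b} h \<and>
     (wint \<alpha> h a b < \<infinity> \<or> wint \<alpha> (\<lambda>\<tau>. - h \<tau>) a b < \<infinity>)"

definition prop_val :: "real \<Rightarrow> (real \<Rightarrow> real) \<Rightarrow> real \<Rightarrow> real \<Rightarrow> ereal" where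
  "prop_val \<alpha> h a b = enn2ereal (wint \<alpha> h a b) - enn2ereal (wint \<alpha> (\<lambda>\<tau>. - h \<tau>) a b)"

definition imp_part_finite :: "real \<Rightarrow> (real \<Rightarrow> real) \<Rightarrow> real \<Rightarrow> bool" where
  "imp_part_finite \<alpha> h b \<longleftrightarrow> (\<forall>\<rho>\<in>{0<..b}. wint \<alpha> h \<rho> b < \<infinity>) \<and>
     (\<exists>L::real. ((\<lambda>\<rho>. wint \<alpha> h \<rho> b) \<longlongrightarrow> ennreal L) (at_right 0))"

definition imp_exists :: "real \<Rightarrow> (real \<Rightarrow> real) \<Rightarrow> real \<Rightarrow> bool" where
  "imp_exists \<alpha> h b \<longleftrightarrow> set_borel_measurable lborel {0<..b} h \<and>
     imp_part_finite \<alpha> h b \<and> imp_part_finite \<alpha> (\<lambda>\<tau>. - h \<tau>) b"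

definition imp_makes_sense :: "real \<Rightarrow> (real \<Rightarrow> real) \<Rightarrow> real \<Rightarrow> bool" where
  "imp_makes_sense \<alpha> h b \<longleftrightarrow> set_borel_measurable lborel {0<..b} h \<and>
     (imp_part_finite \<alpha> h b \<or> imp_part_finite \<alpha> (\<lambda>\<tau>. - h \<tau>) b)"

definition imp_val :: "real \<Rightarrow> (real \<Rightarrow> real) \<Rightarrow> real \<Rightarrow> ereal" where
  "imp_val \<alpha> h b = enn2ereal (Lim (at_right 0) (\<lambda>\<rho>. wint \<alpha> h \<rho> b))
                    - enn2ereal (Lim (at_right 0) (\<lambda>\<rho>. wint \<alpha> (\<lambda>\<tau>. - h \<tau>) \<rho> b))"

definition J_exists :: "real \<Rightarrow> real \<Rightarrow> (real \<Rightarrow> real) \<Rightarrow> real \<Rightarrow> bool" where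
  "J_exists \<alpha> r f t \<longleftrightarrow> imp_exists \<alpha> (\<lambda>\<tau>. f t - f (t - \<tau>)) r"

text \<open>Value of J_r[f](t) (meaningful when it exists); J_0 = 0.\<close>
definition J_val :: "real \<Rightarrow> real \<Rightarrow> (real \<Rightarrow> real) \<Rightarrow> real \<Rightarrow> real" where
  "J_val \<alpha> r f t = (if r = 0 then 0 else
     \<alpha> / Gamma (1 - \<alpha>) * real_of_ereal (imp_val \<alpha> (\<lambda>\<tau>. f t - f (t - \<tau>)) r))"

definition K_makes_sense :: "real \<Rightarrow> real \<Rightarrow> (real \<Rightarrow> real) \<Rightarrow> real \<Rightarrow> bool" where
  "K_makes_sense \<alpha> r f t \<longleftrightarrow> (if r = 0
      then imp_makes_sense \<alpha> (\<lambda>\<tau>. f t - f (t - \<tau>)) t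
      else prop_makes_sense \<alpha> (\<lambda>\<tau>. f t - f (t - \<tau>)) r t)"

definition K_val :: "real \<Rightarrow> real \<Rightarrow> (real \<Rightarrow> real) \<Rightarrow> real \<Rightarrow> ereal" where
  "K_val \<alpha> r f t = ereal ((f t - f 0) / (t powr \<alpha> * Gamma (1 - \<alpha>))) +
     ereal (\<alpha> / Gamma (1 - \<alpha>)) *
       (if r = 0 then imp_val \<alpha> (\<lambda>\<tau>. f t - f (t - \<tau>)) t
        else prop_val \<alpha> (\<lambda>\<tau>. f t - f (t - \<tau>)) r t)"

end

theory Submission
  imports Defs
begin


lemma kern_int:
  assumes "a > -1" "0 \<le> b"
  shows "set_integrable lborel {0<..b} (\<lambda>\<tau>::real. \<tau> powr a)"
proof -
  have "(\<lambda>\<tau>::real. \<tau> powr a) absolutely_integrable_on {0<..b}"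
    by (intro nonnegative_absolutely_integrable_1 integrable_on_powr_from_0') (use assms in auto)
  then have "integrable lebesgue (\<lambda>\<tau>. indicator {0<..b} \<tau> *\<^sub>R \<tau> powr a)"
    by (simp add: set_integrable_def)
  moreover have "(\<lambda>\<tau>::real. indicator {0<..b} \<tau> *\<^sub>R \<tau> powr a) \<in> borel_measurable lborel"
    unfolding measurable_lborel2
    by (intro borel_measurable_continuous_on_indicator continuous_intros) auto
  ultimately show ?thesis
    unfolding set_integrable_def by (simp add: integrable_completion)
qed

lemma powr_kern: "0 < \<tau> \<Longrightarrow> \<tau> * \<tau> powr (-\<alpha>-1) = \<tau> powr (-\<alpha>::real)"
  using powr_add[of \<tau> 1 "-\<alpha>-1"] by simp

lemma one_side:
  fixes h :: "real \<Rightarrow> real"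
  assumes a: "0 < \<alpha>" "\<alpha> < 1" and b: "0 < b"
    and meas: "set_borel_measurable lborel {0<..b} h"
    and bd: "\<And>\<tau>. \<tau> \<in> {0<..b} \<Longrightarrow> h \<tau> \<le> C * \<tau>"
  shows "set_integrable lborel {0<..b} (\<lambda>\<tau>. max (h \<tau>) 0 * \<tau> powr (-\<alpha>-1))"
    and "\<forall>\<rho>\<in>{0<..b}. wint \<alpha> h \<rho> b < \<infinity>"
    and "((\<lambda>\<rho>. wint \<alpha> h \<rho> b) \<longlongrightarrow>
           ennreal (LINT \<tau>:{0<..b}|lborel. max (h \<tau>) 0 * \<tau> powr (-\<alpha>-1))) (at_right 0)"
proof -
  define P where "P = (\<lambda>\<tau>. max (h \<tau>) 0 * \<tau> powr (-\<alpha>-1))"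
  have Pnn: "0 \<le> P \<tau>" for \<tau> by (simp add: P_def)
  have I1: "set_integrable lborel {0<..b} P"
  proof (rule set_integrable_bound)
    show "set_integrable lborel {0<..b} (\<lambda>\<tau>. \<bar>C\<bar> * \<tau> powr (-\<alpha>))"
      using kern_int[of "-\<alpha>" b] a b by simp
    have "(\<lambda>\<tau>. indicator {0<..b} \<tau> *\<^sub>R P \<tau>) =
          (\<lambda>\<tau>. max (indicator {0<..b} \<tau> *\<^sub>R h \<tau>) 0 * \<tau> powr (-\<alpha>-1))"
      by (auto simp: P_def fun_eq_iff indicator_def)
    moreover have "(\<lambda>\<tau>. max (indicator {0<..b} \<tau> *\<^sub>R h \<tau>) 0 * \<tau> powr (-\<alpha>-1)) \<in> borel_measurable lborel"
      using meas unfolding set_borel_measurable_def by measurable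
    ultimately show "set_borel_measurable lborel {0<..b} P"
      unfolding set_borel_measurable_def by simp
    show "AE x in lborel. x \<in> {0<..b} \<longrightarrow> norm (P x) \<le> norm (\<bar>C\<bar> * x powr (-\<alpha>))"
    proof (intro AE_I2 impI)
      fix x :: real assume x: "x \<in> {0<..b}"
      have "C * x \<le> \<bar>C\<bar> * x" using x by (intro mult_right_mono) auto
      moreover have "0 \<le> \<bar>C\<bar> * x" using x by simp
      ultimately have "max (h x) 0 \<le> \<bar>C\<bar> * x" using bd[OF x] by linarith
      then have "P x \<le> \<bar>C\<bar> * x * x powr (-\<alpha>-1)"
        unfolding P_def by (intro mult_right_mono) auto
      also have "\<dots> = \<bar>C\<bar> * x powr (-\<alpha>)" using powr_kern[of x \<alpha>] x by simp
      finally show "norm (P x) \<le> norm (\<bar>C\<bar> * x powr (-\<alpha>))" using Pnn[of x] by simp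
    qed
  qed
  then show "set_integrable lborel {0<..b} (\<lambda>\<tau>. max (h \<tau>) 0 * \<tau> powr (-\<alpha>-1))"
    by (simp add: P_def)
  have W: "wint \<alpha> h \<rho> b = ennreal (LINT \<tau>:{\<rho>..b}|lborel. P \<tau>)" if "\<rho> \<in> {0<..b}" for \<rho>
  proof -
    have I2: "set_integrable lborel {\<rho>..b} P"
      by (rule set_integrable_subset[OF I1]) (use that in auto)
    have "wint \<alpha> h \<rho> b = (\<integral>\<^sup>+ \<tau>. ennreal (indicator {\<rho>..b} \<tau> *\<^sub>R P \<tau>) \<partial>lborel)"
      unfolding wint_def P_def
      by (intro nn_integral_cong) (auto simp: indicator_def)
    also have "\<dots> = ennreal (LINT \<tau>:{\<rho>..b}|lborel. P \<tau>)"
      unfolding set_lebesgue_integral_def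
      by (rule nn_integral_eq_integral) (use I2 Pnn in \<open>auto simp: set_integrable_def indicator_def\<close>)
    finally show ?thesis .
  qed
  then show "\<forall>\<rho>\<in>{0<..b}. wint \<alpha> h \<rho> b < \<infinity>" by simp
  have HK: "(LINT \<tau>:S|lborel. P \<tau>) = integral S P" if "set_integrable lborel S P" for S
    using set_borel_integral_eq_integral(2)[OF that] .
  have Pi0: "P integrable_on {0<..b}" using set_borel_integral_eq_integral(1)[OF I1] .
  have Pi: "P integrable_on {0..b}"
    by (rule integrable_spike_set[OF Pi0]) (use b in \<open>auto intro: negligible_subset[of "{0}"]\<close>)
  have eq0: "integral {0..b} P = integral {0<..b} P"
    by (rule integral_spike_set) (use b in \<open>auto intro: negligible_subset[of "{0}"]\<close>)
  have "((\<lambda>x. integral {x..b} P) \<longlongrightarrow> integral {0..b} P) (at 0 within {0..b})"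
    using indefinite_integral_continuous_1'[OF Pi] b unfolding continuous_on_def by auto
  then have "((\<lambda>x. integral {x..b} P) \<longlongrightarrow> integral {0<..b} P) (at_right 0)"
    using b eq0 by (simp add: at_within_Icc_at_right)
  then have T: "((\<lambda>x. ennreal (integral {x..b} P)) \<longlongrightarrow> ennreal (LINT \<tau>:{0<..b}|lborel. P \<tau>)) (at_right 0)"
    using HK[OF I1] by (intro tendsto_ennrealI) simp
  have ev: "eventually (\<lambda>\<rho>. ennreal (integral {\<rho>..b} P) = wint \<alpha> h \<rho> b) (at_right 0)"
  proof -
    have "eventually (\<lambda>\<rho>. \<rho> \<in> {0<..b}) (at_right (0::real))"
      using b by (auto simp: eventually_at_right_field intro: exI[of _ b])
    then show ?thesis
    proof (rule eventually_mono)
      fix \<rho> assume r: "\<rho> \<in> {0<..b}"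
      have "set_integrable lborel {\<rho>..b} P"
        by (rule set_integrable_subset[OF I1]) (use r in auto)
      then show "ennreal (integral {\<rho>..b} P) = wint \<alpha> h \<rho> b" using W[OF r] HK by simp
    qed
  qed
  show "((\<lambda>\<rho>. wint \<alpha> h \<rho> b) \<longlongrightarrow>
           ennreal (LINT \<tau>:{0<..b}|lborel. max (h \<tau>) 0 * \<tau> powr (-\<alpha>-1))) (at_right 0)"
    using Lim_transform_eventually[OF T ev] by (simp add: P_def)
qed

lemma one_side_fin:
  fixes h :: "real \<Rightarrow> real"
  assumes a: "0 < \<alpha>" "\<alpha> < 1" and b: "0 < b"
    and meas: "set_borel_measurable lborel {0<..b} h"
    and bd: "\<And>\<tau>. \<tau> \<in> {0<..b} \<Longrightarrow> h \<tau> \<le> C * \<tau>"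
  shows "imp_part_finite \<alpha> h b"
    and "enn2ereal (Lim (at_right 0) (\<lambda>\<rho>. wint \<alpha> h \<rho> b)) =
           ereal (LINT \<tau>:{0<..b}|lborel. max (h \<tau>) 0 * \<tau> powr (-\<alpha>-1))"
proof -
  note O = one_side[OF a b meas bd]
  have nn: "0 \<le> (LINT \<tau>:{0<..b}|lborel. max (h \<tau>) 0 * \<tau> powr (-\<alpha>-1))"
    unfolding set_lebesgue_integral_def by (rule Bochner_Integration.integral_nonneg) (auto simp: indicator_def)
  show "imp_part_finite \<alpha> h b"
    unfolding imp_part_finite_def using O(2,3) by blast
  have "Lim (at_right 0) (\<lambda>\<rho>. wint \<alpha> h \<rho> b) =
          ennreal (LINT \<tau>:{0<..b}|lborel. max (h \<tau>) 0 * \<tau> powr (-\<alpha>-1))"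
    by (rule tendsto_Lim[OF _ O(3)]) simp
  then show "enn2ereal (Lim (at_right 0) (\<lambda>\<rho>. wint \<alpha> h \<rho> b)) =
           ereal (LINT \<tau>:{0<..b}|lborel. max (h \<tau>) 0 * \<tau> powr (-\<alpha>-1))"
    using nn by simp
qed

lemma neg_meas: "set_borel_measurable M S (h::'a \<Rightarrow> real) \<Longrightarrow> set_borel_measurable M S (\<lambda>x. - h x)"
  unfolding set_borel_measurable_def
proof -
  assume A: "(\<lambda>x. indicat_real S x *\<^sub>R h x) \<in> borel_measurable M"
  have e: "(\<lambda>x. indicat_real S x *\<^sub>R - h x) = (\<lambda>x. - (indicat_real S x *\<^sub>R h x))"
    by (simp add: fun_eq_iff)
  show "(\<lambda>x. indicat_real S x *\<^sub>R - h x) \<in> borel_measurable M"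
    unfolding e by (rule borel_measurable_uminus[OF A])
qed

lemma two_side:
  fixes h :: "real \<Rightarrow> real"
  assumes a: "0 < \<alpha>" "\<alpha> < 1" and b: "0 < b"
    and meas: "set_borel_measurable lborel {0<..b} h"
    and bd: "\<And>\<tau>. \<tau> \<in> {0<..b} \<Longrightarrow> \<bar>h \<tau>\<bar> \<le> C * \<tau>"
  shows "imp_exists \<alpha> h b"
    and "set_integrable lborel {0<..b} (\<lambda>\<tau>. h \<tau> * \<tau> powr (-\<alpha>-1))"
    and "imp_val \<alpha> h b = ereal (LINT \<tau>:{0<..b}|lborel. h \<tau> * \<tau> powr (-\<alpha>-1))"
proof -
  have b1: "h \<tau> \<le> C * \<tau>" if "\<tau> \<in> {0<..b}" for \<tau> using bd[OF that] by linarith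
  have b2: "- h \<tau> \<le> C * \<tau>" if "\<tau> \<in> {0<..b}" for \<tau> using bd[OF that] by linarith
  note P1 = one_side[OF a b meas b1] and P2 = one_side[OF a b neg_meas[OF meas] b2]
  note F1 = one_side_fin[OF a b meas b1] and F2 = one_side_fin[OF a b neg_meas[OF meas] b2]
  show "imp_exists \<alpha> h b" unfolding imp_exists_def using meas F1(1) F2(1) by blast
  have eq: "\<forall>\<tau>. \<tau> \<in> {0<..b} \<longrightarrow> max (h \<tau>) 0 * \<tau> powr (-\<alpha>-1) - max (- h \<tau>) 0 * \<tau> powr (-\<alpha>-1)
       = h \<tau> * \<tau> powr (-\<alpha>-1)"
    by (auto simp: max_def algebra_simps)
  note D = set_integral_diff[OF P1(1) P2(1)]
  show I: "set_integrable lborel {0<..b} (\<lambda>\<tau>. h \<tau> * \<tau> powr (-\<alpha>-1))"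
  proof -
    have "(\<lambda>\<tau>. indicator {0<..b} \<tau> *\<^sub>R (max (h \<tau>) 0 * \<tau> powr (-\<alpha>-1) - max (- h \<tau>) 0 * \<tau> powr (-\<alpha>-1)))
        = (\<lambda>\<tau>. indicator {0<..b} \<tau> *\<^sub>R (h \<tau> * \<tau> powr (-\<alpha>-1)))"
      using eq by (auto simp: fun_eq_iff indicator_def)
    then show ?thesis using D(1) unfolding set_integrable_def by simp
  qed
  have "imp_val \<alpha> h b = ereal (LINT \<tau>:{0<..b}|lborel. max (h \<tau>) 0 * \<tau> powr (-\<alpha>-1))
      - ereal (LINT \<tau>:{0<..b}|lborel. max (- h \<tau>) 0 * \<tau> powr (-\<alpha>-1))"
    unfolding imp_val_def by (simp only: F1(2) F2(2))
  also have "\<dots> = ereal (LINT \<tau>:{0<..b}|lborel. max (h \<tau>) 0 * \<tau> powr (-\<alpha>-1) - max (- h \<tau>) 0 * \<tau> powr (-\<alpha>-1))"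
    using D(2) by simp
  also have "\<dots> = ereal (LINT \<tau>:{0<..b}|lborel. h \<tau> * \<tau> powr (-\<alpha>-1))"
    using set_lebesgue_integral_cong[OF _ eq] by simp
  finally show "imp_val \<alpha> h b = ereal (LINT \<tau>:{0<..b}|lborel. h \<tau> * \<tau> powr (-\<alpha>-1))" .
qed

lemma C1_cont: "C1_on S g \<Longrightarrow> continuous_on S g"
  unfolding C1_on_def by (auto intro: DERIV_continuous_on)

lemma C1_lip:
  assumes "C1_on {0<..T} g" "0 < a"
  shows "\<exists>M\<ge>0. \<forall>x\<in>{a..T}. \<forall>y\<in>{a..T}. \<bar>g x - g y\<bar> \<le> M * \<bar>x - y\<bar>"
proof -
  obtain g' where c: "continuous_on {0<..T} g'" and d: "\<forall>t\<in>{0<..T}. (g has_real_derivative g' t) (at t within {0<..T})"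
    using assms(1) unfolding C1_on_def by blast
  have sub: "{a..T} \<subseteq> {0<..T}" using assms(2) by auto
  have "bounded (g' ` {a..T})"
    by (intro compact_imp_bounded compact_continuous_image continuous_on_subset[OF c sub]) simp
  then obtain B where B: "\<forall>x\<in>{a..T}. norm (g' x) \<le> B" by (auto simp: bounded_iff)
  have "\<bar>g x - g y\<bar> \<le> max B 0 * \<bar>x - y\<bar>" if "x \<in> {a..T}" "y \<in> {a..T}" for x y
  proof -
    have "norm (g x - g y) \<le> max B 0 * norm (x - y)"
    proof (rule field_differentiable_bound[of "{a..T}"])
      show "convex {a..T}" by simp
      show "(g has_field_derivative g' z) (at z within {a..T})" if "z \<in> {a..T}" for z
        using d that sub by (meson DERIV_subset subsetD)
      show "norm (g' z) \<le> max B 0" if "z \<in> {a..T}" for z using B that by fastforce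
    qed (use that in auto)
    then show ?thesis by simp
  qed
  then show ?thesis by (intro exI[of _ "max B 0"]) auto
qed

lemma g_meas:
  fixes g :: "real \<Rightarrow> real"
  assumes "continuous_on {0<..T} g" "0 < r" "r < t" "t \<le> T"
  shows "set_borel_measurable lborel {0<..r} (\<lambda>\<tau>. g t - g (t - \<tau>))"
  unfolding set_borel_measurable_def measurable_lborel2
proof (rule borel_measurable_continuous_on_indicator)
  have "continuous_on {0<..r} (\<lambda>x. g (t - x))"
    by (rule continuous_on_compose2[OF assms(1)]) (use assms in \<open>auto intro!: continuous_intros\<close>)
  then show "continuous_on {0<..r} (\<lambda>x. g t - g (t - x))"
    by (intro continuous_intros)
qed simp

lemma J_g:
  assumes a: "0 < \<alpha>" "\<alpha> < 1" and g: "C1_on {0<..T} g" and t: "t \<le> T" and r: "0 < r" "r < t"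
  shows "J_exists \<alpha> r g t"
    and "set_integrable lborel {0<..r} (\<lambda>\<tau>. (g t - g (t - \<tau>)) * \<tau> powr (-\<alpha>-1))"
    and "J_val \<alpha> r g t = \<alpha> / Gamma (1 - \<alpha>) * (LINT \<tau>:{0<..r}|lborel. (g t - g (t - \<tau>)) * \<tau> powr (-\<alpha>-1))"
proof -
  obtain M where M: "M \<ge> 0" "\<forall>x\<in>{t-r..T}. \<forall>y\<in>{t-r..T}. \<bar>g x - g y\<bar> \<le> M * \<bar>x - y\<bar>"
    using C1_lip[OF g, of "t - r"] r by auto
  have bd: "\<bar>g t - g (t - \<tau>)\<bar> \<le> M * \<tau>" if "\<tau> \<in> {0<..r}" for \<tau>
  proof -
    have "t \<in> {t-r..T}" "t - \<tau> \<in> {t-r..T}" using that t r by auto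
    then have "\<bar>g t - g (t - \<tau>)\<bar> \<le> M * \<bar>t - (t - \<tau>)\<bar>" using M(2) by blast
    then show ?thesis using that by simp
  qed
  note R = two_side[OF a r(1) g_meas[OF C1_cont[OF g] r t] bd]
  show "J_exists \<alpha> r g t" unfolding J_exists_def using R(1) .
  show "set_integrable lborel {0<..r} (\<lambda>\<tau>. (g t - g (t - \<tau>)) * \<tau> powr (-\<alpha>-1))" using R(2) .
  show "J_val \<alpha> r g t = \<alpha> / Gamma (1 - \<alpha>) * (LINT \<tau>:{0<..r}|lborel. (g t - g (t - \<tau>)) * \<tau> powr (-\<alpha>-1))"
    unfolding J_val_def using R(3) r by simp
qed



lemma usc_open:
  fixes f :: "real \<Rightarrow> real"
  assumes "usc_on S f"
  shows "\<exists>U. open U \<and> {x\<in>S. f x < a} = S \<inter> U"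
proof -
  have "openin (top_of_set S) {x\<in>S. f x < a}"
    unfolding openin_euclidean_subtopology_iff
  proof (intro conjI ballI)
    show "{x\<in>S. f x < a} \<subseteq> S" by auto
    fix x assume x: "x \<in> {x\<in>S. f x < a}"
    then have "\<forall>\<^sub>F y in at x within S. f y < a" using assms unfolding usc_on_def by auto
    then obtain d where d: "d>0" "\<forall>y\<in>S. y \<noteq> x \<and> dist y x < d \<longrightarrow> f y < a"
      by (auto simp: eventually_at)
    show "\<exists>e>0. \<forall>x'\<in>S. dist x' x < e \<longrightarrow> x' \<in> {x\<in>S. f x < a}"
      using d x by (intro exI[of _ d]) auto
  qed
  then show ?thesis by (simp add: openin_open)
qed

lemma usc_meas:
  fixes f :: "real \<Rightarrow> real"
  assumes "usc_on {0..T} f"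
  shows "(\<lambda>x. indicator {0..T} x *\<^sub>R f x) \<in> borel_measurable borel"
proof (rule borel_measurable_iff_less[THEN iffD2], intro allI)
  fix a :: real
  obtain U where U: "open U" "{x\<in>{0..T}. f x < a} = {0..T} \<inter> U" using usc_open[OF assms] by blast
  have U2: "\<And>x. x \<in> {0..T} \<Longrightarrow> (f x < a) = (x \<in> U)" using U(2) by blast
  have "{w \<in> space borel. indicator {0..T} w *\<^sub>R f w < a} =
      ({0..T} \<inter> U) \<union> (if 0 < a then - {0..T} else {})"
    by (auto simp: indicator_def U2)
  also have "\<dots> \<in> sets borel" using U(1) by auto
  finally show "{w \<in> space borel. indicator {0..T} w *\<^sub>R f w < a} \<in> sets borel" .
qed

lemma usc_h_meas:
  fixes f :: "real \<Rightarrow> real"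
  assumes "usc_on {0..T} f" "t \<le> T" "A \<subseteq> {0..t}" "A \<in> sets borel"
  shows "set_borel_measurable lborel A (\<lambda>\<tau>. f t - f (t - \<tau>))"
proof -
  define F where "F = (\<lambda>x. indicator {0..T} x *\<^sub>R f x)"
  have FM[measurable]: "F \<in> borel_measurable borel" unfolding F_def by (rule usc_meas[OF assms(1)])
  have AM[measurable]: "A \<in> sets borel" by fact
  have "(\<lambda>\<tau>. indicator A \<tau> *\<^sub>R (f t - f (t - \<tau>))) = (\<lambda>\<tau>. indicator A \<tau> *\<^sub>R (f t - F (t - \<tau>)))"
    using assms(2,3) by (auto simp: fun_eq_iff indicator_def F_def)
  moreover have "(\<lambda>\<tau>. indicator A \<tau> *\<^sub>R (f t - F (t - \<tau>))) \<in> borel_measurable borel"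
    by measurable
  ultimately show ?thesis unfolding set_borel_measurable_def by simp
qed

lemma usc_bdd:
  fixes f :: "real \<Rightarrow> real"
  assumes "usc_on {0..T} f"
  shows "\<exists>S. \<forall>x\<in>{0..T}. f x \<le> S"
proof -
  have "\<forall>n::nat. \<exists>U. open U \<and> {x\<in>{0..T}. f x < real n} = {0..T} \<inter> U"
    using usc_open[OF assms] by blast
  then obtain U where U: "\<And>n. open (U n)" "\<And>n. {x\<in>{0..T}. f x < real n} = {0..T} \<inter> U n"
    by metis
  have cov: "{0..T} \<subseteq> (\<Union>n\<in>UNIV. U n)"
  proof
    fix x assume x: "x \<in> {0..T}"
    obtain n where "f x < real n" using reals_Archimedean2 by blast
    then have "x \<in> U n" using U(2)[of n] x by blast
    then show "x \<in> (\<Union>n\<in>UNIV. U n)" by blast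
  qed
  obtain J where J: "finite J" "{0..T} \<subseteq> (\<Union>n\<in>J. U n)"
    using compactE_image[OF compact_Icc, of UNIV U] U(1) cov by auto
  have "f x \<le> real (Max (insert 0 J))" if x: "x \<in> {0..T}" for x
  proof -
    obtain n where n: "n \<in> J" "x \<in> U n" using J(2) x by blast
    then have "f x < real n" using U(2)[of n] x by blast
    moreover have "n \<le> Max (insert 0 J)" using J(1) n(1) by simp
    ultimately show ?thesis by linarith
  qed
  then show ?thesis by blast
qed

lemma wint_bdd_fin:
  assumes "0 < r" "r \<le> t" "\<And>\<tau>. \<tau> \<in> {r..t} \<Longrightarrow> h \<tau> \<le> B" "0 \<le> \<alpha>"
  shows "wint \<alpha> h r t < \<infinity>"
proof -
  define c where "c = max B 0 * r powr (-\<alpha>-1)"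
  have "wint \<alpha> h r t \<le> (\<integral>\<^sup>+ \<tau>. ennreal c * indicator {r..t} \<tau> \<partial>lborel)"
    unfolding wint_def
  proof (intro nn_integral_mono)
    fix \<tau> :: real
    show "ennreal (max (h \<tau>) 0 * \<tau> powr (- \<alpha> - 1)) * indicator {r..t} \<tau> \<le> ennreal c * indicator {r..t} \<tau>"
    proof (cases "\<tau> \<in> {r..t}")
      case True
      have "max (h \<tau>) 0 \<le> max B 0" using assms(3)[OF True] by simp
      moreover have "\<tau> powr (-\<alpha>-1) \<le> r powr (-\<alpha>-1)"
        using True assms by (intro powr_mono2') auto
      ultimately have "max (h \<tau>) 0 * \<tau> powr (- \<alpha> - 1) \<le> c"
        unfolding c_def by (intro mult_mono) auto
      then show ?thesis using True by (simp add: ennreal_leI)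
    qed simp
  qed
  also have "\<dots> = ennreal c * ennreal (t - r)"
    using assms by (simp add: nn_integral_cmult_indicator)
  also have "\<dots> < \<infinity>" by (simp add: ennreal_mult_less_top)
  finally show ?thesis .
qed

lemma ereal_gt:
  assumes "0 < k"
  shows "-\<infinity> < ereal c + ereal k * (enn2ereal A - ereal b)"
proof (cases A rule: ennreal_cases)
  case (real a)
  then show ?thesis by simp
next
  case top
  then show ?thesis using assms by simp
qed

lemma kpos: "0 < (\<alpha>::real) \<Longrightarrow> \<alpha> < 1 \<Longrightarrow> 0 < \<alpha> / Gamma (1 - \<alpha>)"
  using Gamma_real_pos[of "1 - \<alpha>"] by simp

lemma ereal_gt2:
  assumes "0 < k" "B < \<infinity>"
  shows "-\<infinity> < ereal c + ereal k * (enn2ereal A - enn2ereal B)"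
proof (cases B rule: ennreal_cases)
  case (real b)
  then show ?thesis using ereal_gt[OF assms(1), of c A b] by simp
next
  case top
  then show ?thesis using assms by simp
qed

lemma usc_part:
  fixes f g :: "real \<Rightarrow> real"
  assumes T: "T > 0" and a: "0 < \<alpha>" "\<alpha> < 1" and g: "C1_on {0<..T} g" and f: "usc_on {0..T} f"
  shows "(\<forall>t\<in>{0<..T}. \<forall>r\<in>{0<..<t}. K_makes_sense \<alpha> r f t \<and> K_val \<alpha> r f t > -\<infinity>)
        \<and> (\<forall>th\<in>{0<..T}. (\<forall>s\<in>{0<..T}. f s - g s \<le> f th - g th) \<longrightarrow>
              K_makes_sense \<alpha> 0 f th \<and> K_val \<alpha> 0 f th > -\<infinity>)"
proof (intro conjI ballI impI)
  obtain S where S: "\<forall>x\<in>{0..T}. f x \<le> S" using usc_bdd[OF f] by blast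
  have k: "0 < \<alpha> / Gamma (1 - \<alpha>)" using kpos[OF a] .
  {
    fix t r assume t: "t \<in> {0<..T}" and r: "r \<in> {0<..<t}"
    have fin: "wint \<alpha> (\<lambda>\<tau>. - (f t - f (t - \<tau>))) r t < \<infinity>"
    proof (rule wint_bdd_fin[where B = "S - f t"])
      fix \<tau> assume "\<tau> \<in> {r..t}"
      then have "t - \<tau> \<in> {0..T}" using t r by auto
      then show "- (f t - f (t - \<tau>)) \<le> S - f t" using S by auto
    qed (use r a in auto)
    have meas: "set_borel_measurable lborel {r..t} (\<lambda>\<tau>. f t - f (t - \<tau>))"
      by (rule usc_h_meas[OF f]) (use t r in auto)
    show "K_makes_sense \<alpha> r f t"
      unfolding K_makes_sense_def prop_makes_sense_def using r meas fin by auto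
    show "K_val \<alpha> r f t > -\<infinity>"
    proof -
      have rne: "r \<noteq> 0" using r by simp
      show ?thesis unfolding K_val_def prop_val_def if_not_P[OF rne] by (rule ereal_gt2[OF k fin])
    qed
  }
  fix th assume th: "th \<in> {0<..T}" and mx: "\<forall>s\<in>{0<..T}. f s - g s \<le> f th - g th"
  define \<delta> where "\<delta> = th / 2"
  have d: "0 < \<delta>" "\<delta> < th" using th by (auto simp: \<delta>_def)
  obtain M where M: "M \<ge> 0" "\<forall>x\<in>{\<delta>..T}. \<forall>y\<in>{\<delta>..T}. \<bar>g x - g y\<bar> \<le> M * \<bar>x - y\<bar>"
    using C1_lip[OF g d(1)] by blast
  define B where "B = max (S - f th) 0"
  define C where "C = M + B / \<delta>"
  have bd: "- (f th - f (th - \<tau>)) \<le> C * \<tau>" if tau: "\<tau> \<in> {0<..th}" for \<tau>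
  proof (cases "\<tau> \<le> \<delta>")
    case True
    have s: "th - \<tau> \<in> {0<..T}" "th - \<tau> \<in> {\<delta>..T}" "th \<in> {\<delta>..T}" using True tau th d by (auto simp: \<delta>_def)
    have "f (th - \<tau>) - f th \<le> g (th - \<tau>) - g th" using mx s(1) by fastforce
    also have "\<dots> \<le> \<bar>g (th - \<tau>) - g th\<bar>" by simp
    also have "\<dots> \<le> M * \<bar>(th - \<tau>) - th\<bar>" using M(2) s(2,3) by blast
    also have "\<dots> = M * \<tau>" using tau by simp
    also have "\<dots> \<le> C * \<tau>" unfolding C_def using tau d by (intro mult_right_mono) (auto simp: B_def)
    finally show ?thesis by simp
  next
    case False
    have "th - \<tau> \<in> {0..T}" using tau th by auto
    then have "f (th - \<tau>) \<le> S" using S by blast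
    then have "f (th - \<tau>) - f th \<le> B" unfolding B_def by linarith
    also have "B = B / \<delta> * \<delta>" using d by simp
    also have "\<dots> \<le> B / \<delta> * \<tau>" using False d by (intro mult_left_mono) (auto simp: B_def)
    also have "\<dots> \<le> C * \<tau>" unfolding C_def using tau M by (intro mult_right_mono) auto
    finally show ?thesis by simp
  qed
  have meas: "set_borel_measurable lborel {0<..th} (\<lambda>\<tau>. f th - f (th - \<tau>))"
    by (rule usc_h_meas[OF f]) (use th in auto)
  have thp: "0 < th" using th by simp
  note F = one_side_fin[OF a thp neg_meas[OF meas] bd]
  show "K_makes_sense \<alpha> 0 f th"
    unfolding K_makes_sense_def imp_makes_sense_def using meas F(1) by auto
  show "K_val \<alpha> 0 f th > -\<infinity>"
  proof -
    have "\<exists>v. enn2ereal (Lim (at_right 0) (\<lambda>\<rho>. wint \<alpha> (\<lambda>\<tau>. - (f th - f (th - \<tau>))) \<rho> th)) = ereal v"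
      using F(2) by auto
    then obtain v where F2: "enn2ereal (Lim (at_right 0) (\<lambda>\<rho>. wint \<alpha> (\<lambda>\<tau>. - (f th - f (th - \<tau>))) \<rho> th)) = ereal v"
      by blast
    show ?thesis unfolding K_val_def imp_val_def if_P[OF refl] F2 by (rule ereal_gt[OF k])
  qed
qed

lemma lsc_neg: "lsc_on S f \<Longrightarrow> usc_on S (\<lambda>x. - f x)"
  unfolding lsc_on_def usc_on_def
proof (intro ballI allI impI)
  fix x a assume L: "\<forall>x\<in>S. \<forall>a. a < f x \<longrightarrow> (\<forall>\<^sub>F y in at x within S. a < f y)"
    and x: "x \<in> S" and lt: "- f x < a"
  have "\<forall>\<^sub>F y in at x within S. - a < f y" using L x lt by auto
  then show "\<forall>\<^sub>F y in at x within S. - f y < a" by (rule eventually_mono) auto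
qed

lemma C1_neg: "C1_on S g \<Longrightarrow> C1_on S (\<lambda>x. - g x)"
  unfolding C1_on_def
proof (elim exE conjE)
  fix g' assume c: "continuous_on S g'" and d: "\<forall>t\<in>S. (g has_real_derivative g' t) (at t within S)"
  show "\<exists>g'. continuous_on S g' \<and> (\<forall>t\<in>S. ((\<lambda>x. - g x) has_real_derivative g' t) (at t within S))"
    using c d by (intro exI[of _ "\<lambda>x. - g' x"]) (auto intro: continuous_intros derivative_intros)
qed

lemma neg_meas_iff: "set_borel_measurable M S (\<lambda>x. - h x) = set_borel_measurable M S (h::'a \<Rightarrow> real)"
  using neg_meas[of M S h] neg_meas[of M S "\<lambda>x. - h x"] by auto

lemma ereal_swap: "a < top \<or> b < top \<Longrightarrow> enn2ereal a - enn2ereal b = - (enn2ereal b - enn2ereal a)"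
  by (cases a rule: ennreal_cases; cases b rule: ennreal_cases) auto

lemma ereal_neg_aff: "0 < k \<Longrightarrow> - (ereal c + ereal k * X) = ereal (-c) + ereal k * (- X)"
  by (cases X) auto

lemma Lim_fin: "imp_part_finite \<alpha> h b \<Longrightarrow> Lim (at_right 0) (\<lambda>\<rho>. wint \<alpha> h \<rho> b) < top"
proof -
  assume "imp_part_finite \<alpha> h b"
  then obtain L :: real where L: "((\<lambda>\<rho>. wint \<alpha> h \<rho> b) \<longlongrightarrow> ennreal L) (at_right 0)"
    unfolding imp_part_finite_def by blast
  have "Lim (at_right 0) (\<lambda>\<rho>. wint \<alpha> h \<rho> b) = ennreal L"
    by (rule tendsto_Lim[OF _ L]) simp
  then show ?thesis by simp
qed

lemma K_neg:
  fixes f :: "real \<Rightarrow> real"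
  assumes k: "0 < \<alpha> / Gamma (1 - \<alpha>)"
  shows "K_makes_sense \<alpha> r (\<lambda>x. - f x) t = K_makes_sense \<alpha> r f t"
    and "K_makes_sense \<alpha> r f t \<Longrightarrow> K_val \<alpha> r (\<lambda>x. - f x) t = - K_val \<alpha> r f t"
proof -
  have e1: "\<And>\<tau>. - f t - - f (t - \<tau>) = - (f t - f (t - \<tau>))" by simp
  have e2: "\<And>x::real. - (- x) = x" by simp
  show "K_makes_sense \<alpha> r (\<lambda>x. - f x) t = K_makes_sense \<alpha> r f t"
    unfolding K_makes_sense_def prop_makes_sense_def imp_makes_sense_def
    by (simp only: e1 e2 neg_meas_iff) (cases "r = 0"; auto)
  have e3: "(- f t - - f 0) / (t powr \<alpha> * Gamma (1 - \<alpha>)) = - ((f t - f 0) / (t powr \<alpha> * Gamma (1 - \<alpha>)))"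
    unfolding minus_divide_left by simp
  assume ms: "K_makes_sense \<alpha> r f t"
  define c where "c = (f t - f 0) / (t powr \<alpha> * Gamma (1 - \<alpha>))"
  define k where "k = \<alpha> / Gamma (1 - \<alpha>)"
  show "K_val \<alpha> r (\<lambda>x. - f x) t = - K_val \<alpha> r f t"
  proof (cases "r = 0")
    case True
    define A where "A = Lim (at_right 0) (\<lambda>\<rho>. wint \<alpha> (\<lambda>\<tau>. f t - f (t - \<tau>)) \<rho> t)"
    define B where "B = Lim (at_right 0) (\<lambda>\<rho>. wint \<alpha> (\<lambda>\<tau>. - (f t - f (t - \<tau>))) \<rho> t)"
    have fin: "A < top \<or> B < top" using ms True Lim_fin
      unfolding K_makes_sense_def imp_makes_sense_def A_def B_def by auto
    have 1: "K_val \<alpha> r (\<lambda>x. - f x) t = ereal (-c) + ereal k * (enn2ereal B - enn2ereal A)"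
      unfolding K_val_def imp_val_def c_def k_def A_def B_def if_P[OF True] by (simp only: e1 e2 e3)
    have 2: "K_val \<alpha> r f t = ereal c + ereal k * (enn2ereal A - enn2ereal B)"
      unfolding K_val_def imp_val_def c_def k_def A_def B_def if_P[OF True] ..
    show ?thesis unfolding 1 2 ereal_neg_aff[OF k[folded k_def]] ereal_swap[OF fin] by simp
  next
    case False
    define A where "A = wint \<alpha> (\<lambda>\<tau>. f t - f (t - \<tau>)) r t"
    define B where "B = wint \<alpha> (\<lambda>\<tau>. - (f t - f (t - \<tau>))) r t"
    have fin: "A < top \<or> B < top" using ms False
      unfolding K_makes_sense_def prop_makes_sense_def A_def B_def by auto
    have 1: "K_val \<alpha> r (\<lambda>x. - f x) t = ereal (-c) + ereal k * (enn2ereal B - enn2ereal A)"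
      unfolding K_val_def prop_val_def c_def k_def A_def B_def if_not_P[OF False] by (simp only: e1 e2 e3)
    have 2: "K_val \<alpha> r f t = ereal c + ereal k * (enn2ereal A - enn2ereal B)"
      unfolding K_val_def prop_val_def c_def k_def A_def B_def if_not_P[OF False] ..
    show ?thesis unfolding 1 2 ereal_neg_aff[OF k[folded k_def]] ereal_swap[OF fin] by simp
  qed
qed



lemma powr_dom:
  assumes "0 < (\<tau>::real)" "0 \<le> a" "a \<le> \<beta>"
  shows "\<tau> powr (-a) \<le> \<tau> powr (-\<beta>) + 1"
proof (cases "\<tau> \<le> 1")
  case True
  then have "\<tau> powr (-a) \<le> \<tau> powr (-\<beta>)" using assms by (intro powr_mono') auto
  then show ?thesis by simp
next
  case False
  then have "\<tau> powr (-a) \<le> \<tau> powr 0" using assms by (intro powr_mono) auto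
  moreover have "0 \<le> \<tau> powr (-\<beta>)" by simp
  moreover have "\<tau> powr 0 = 1" using assms by simp
  ultimately show ?thesis by linarith
qed

lemma part4:
  fixes g :: "real \<Rightarrow> real"
  assumes T: "T > 0" and a: "0 < \<alpha>" "\<alpha> < 1" and g: "C1_on {0<..T} g"
    and H: "\<forall>j. ts j \<in> {0<..T} \<and> rs j \<in> {0<..<ts j} \<and> als j \<in> {0<..<1}"
    and lt: "ts \<longlonglongrightarrow> th" and lr: "rs \<longlonglongrightarrow> rh" and la: "als \<longlonglongrightarrow> \<alpha>"
    and th: "th \<in> {0<..T}" and rh: "rh \<in> {0..<th}"
  shows "(\<lambda>j. J_val (als j) (rs j) g (ts j)) \<longlonglongrightarrow> J_val \<alpha> rh g th"
proof -
  define s where "s = (\<lambda>j \<tau>. indicator {0<..rs j} \<tau> *\<^sub>R ((g (ts j) - g (ts j - \<tau>)) * \<tau> powr (- als j - 1)))"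
  define F where "F = (\<lambda>\<tau>. indicator {0<..rh} \<tau> *\<^sub>R ((g th - g (th - \<tau>)) * \<tau> powr (- \<alpha> - 1)))"
  have gc: "continuous_on {0<..T} g" using C1_cont[OF g] .
  have Jj: "J_val (als j) (rs j) g (ts j) = als j / Gamma (1 - als j) * integral\<^sup>L lborel (s j)" for j
    using J_g(3)[OF _ _ g, of "als j" "ts j" "rs j"] H unfolding s_def set_lebesgue_integral_def by auto
  have sm: "s j \<in> borel_measurable lborel" for j
    using J_g(2)[OF _ _ g, of "als j" "ts j" "rs j"] H unfolding s_def set_integrable_def by auto
  have Jl: "J_val \<alpha> rh g th = \<alpha> / Gamma (1 - \<alpha>) * integral\<^sup>L lborel F \<and> F \<in> borel_measurable lborel"
  proof (cases "rh = 0")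
    case True
    then have "F = (\<lambda>_. 0)" unfolding F_def by (auto simp: fun_eq_iff)
    then show ?thesis using True by (simp add: J_val_def)
  next
    case False
    then have r: "0 < rh" using rh by simp
    show ?thesis using J_g(2,3)[OF a g _ r, of th] rh th
      unfolding F_def set_lebesgue_integral_def set_integrable_def by auto
  qed
  have kl: "(\<lambda>j. als j / Gamma (1 - als j)) \<longlonglongrightarrow> \<alpha> / Gamma (1 - \<alpha>)"
  proof (intro tendsto_divide la)
    have "isCont Gamma (1 - \<alpha>)"
    proof -
      have "1 - \<alpha> \<notin> \<int>\<^sub>\<le>\<^sub>0" using a nonpos_Ints_nonpos[of "1 - \<alpha>"] by auto
      then show ?thesis using isCont_Gamma[where f="\<lambda>x::real. x" and z="1 - \<alpha>"] by simp
    qed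
    then show "(\<lambda>j. Gamma (1 - als j)) \<longlonglongrightarrow> Gamma (1 - \<alpha>)"
      by (rule isCont_tendsto_compose) (intro tendsto_intros la)
    show "Gamma (1 - \<alpha>) \<noteq> 0" using kpos[OF a] by auto
  qed
  define \<delta> where "\<delta> = (th - rh) / 2"
  define \<beta> where "\<beta> = (1 + \<alpha>) / 2"
  have d: "0 < \<delta>" "\<delta> < th - rh" using rh by (auto simp: \<delta>_def)
  have b: "\<alpha> < \<beta>" "\<beta> < 1" using a by (auto simp: \<beta>_def)
  have "eventually (\<lambda>j. \<delta> < ts j - rs j) sequentially"
    by (rule order_tendstoD(1)[OF tendsto_diff[OF lt lr] d(2)])
  moreover have "eventually (\<lambda>j. als j < \<beta>) sequentially"
    by (rule order_tendstoD(2)[OF la b(1)])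
  ultimately obtain N where N: "\<And>j. j \<ge> N \<Longrightarrow> \<delta> < ts j - rs j \<and> als j < \<beta>"
    unfolding eventually_sequentially by (metis (no_types, lifting) eventually_conj eventually_sequentially)
  obtain M where M: "M \<ge> 0" "\<forall>x\<in>{\<delta>..T}. \<forall>y\<in>{\<delta>..T}. \<bar>g x - g y\<bar> \<le> M * \<bar>x - y\<bar>"
    using C1_lip[OF g d(1)] by blast
  define w where "w = (\<lambda>\<tau>::real. indicator {0<..T} \<tau> *\<^sub>R (M * (\<tau> powr (-\<beta>) + 1)))"
  have wi: "integrable lborel w"
  proof -
    have "set_integrable lborel {0<..T} (\<lambda>\<tau>::real. \<tau> powr (-\<beta>))"
      using kern_int[of "-\<beta>" T] b T by simp
    moreover have "set_integrable lborel {0<..T} (\<lambda>\<tau>::real. 1)"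
      unfolding set_integrable_def using T by (simp add: integrable_real_indicator)
    ultimately have "set_integrable lborel {0<..T} (\<lambda>\<tau>::real. \<tau> powr (-\<beta>) + 1)"
      by (rule set_integral_add)
    then have "set_integrable lborel {0<..T} (\<lambda>\<tau>::real. M * (\<tau> powr (-\<beta>) + 1))"
      by simp
    then show ?thesis unfolding set_integrable_def w_def .
  qed
  have bound: "norm (s j \<tau>) \<le> w \<tau>" if j: "j \<ge> N" for j \<tau>
  proof (cases "\<tau> \<in> {0<..rs j}")
    case False
    have "0 \<le> w \<tau>" unfolding w_def using M by (auto simp: indicator_def)
    then show ?thesis using False by (simp add: s_def)
  next
    case True
    have Hj: "ts j \<in> {0<..T}" "rs j \<in> {0<..<ts j}" "als j \<in> {0<..<1}" using H by auto
    have Nj: "\<delta> < ts j - rs j" "als j < \<beta>" using N[OF j] by auto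
    have tT: "\<tau> \<in> {0<..T}" using True Hj by auto
    have "ts j \<in> {\<delta>..T}" "ts j - \<tau> \<in> {\<delta>..T}" using True Hj Nj d by auto
    then have "\<bar>g (ts j) - g (ts j - \<tau>)\<bar> \<le> M * \<bar>ts j - (ts j - \<tau>)\<bar>" using M(2) by blast
    then have gb: "\<bar>g (ts j) - g (ts j - \<tau>)\<bar> \<le> M * \<tau>" using True by simp
    have "norm (s j \<tau>) = \<bar>g (ts j) - g (ts j - \<tau>)\<bar> * \<tau> powr (- als j - 1)"
      using True by (simp add: s_def abs_mult)
    also have "\<dots> \<le> M * \<tau> * \<tau> powr (- als j - 1)"
      by (intro mult_right_mono gb) simp
    also have "\<dots> = M * \<tau> powr (- als j)" using powr_kern[of \<tau> "als j"] True by simp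
    also have "\<dots> \<le> M * (\<tau> powr (-\<beta>) + 1)"
      using powr_dom[of \<tau> "als j" \<beta>] True Hj Nj M by (intro mult_left_mono) auto
    also have "\<dots> = w \<tau>" using tT by (simp add: w_def)
    finally show ?thesis .
  qed
  have lim: "(\<lambda>j. s j \<tau>) \<longlonglongrightarrow> F \<tau>" if tr: "\<tau> \<noteq> rh" for \<tau>
  proof (cases "\<tau> \<le> 0")
    case True
    then show ?thesis by (simp add: s_def F_def)
  next
    case False
    then have tp: "0 < \<tau>" by simp
    show ?thesis
    proof (cases "\<tau> < rh")
      case True
      have ev: "eventually (\<lambda>j. \<tau> < rs j) sequentially"
        by (rule order_tendstoD(1)[OF lr True])
      have thin: "th - \<tau> \<in> {0<..T}" using True th rh tp by auto
      have ev2: "eventually (\<lambda>j. ts j - \<tau> \<in> {0<..T}) sequentially"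
      proof (rule eventually_mono[OF ev])
        fix x assume "\<tau> < rs x"
        moreover have "rs x < ts x" "ts x \<le> T" using H by auto
        ultimately show "ts x - \<tau> \<in> {0<..T}" using tp by auto
      qed
      have c1: "(\<lambda>j. g (ts j)) \<longlonglongrightarrow> g th"
        by (rule continuous_on_tendsto_compose[OF gc lt th]) (use H in auto)
      have c2: "(\<lambda>j. g (ts j - \<tau>)) \<longlonglongrightarrow> g (th - \<tau>)"
        by (rule continuous_on_tendsto_compose[OF gc _ thin ev2]) (intro tendsto_intros lt)
      have c3: "(\<lambda>j. \<tau> powr (- als j - 1)) \<longlonglongrightarrow> \<tau> powr (- \<alpha> - 1)"
        by (rule tendsto_powr) (use tp in \<open>auto intro!: tendsto_intros la\<close>)
      have "(\<lambda>j. (g (ts j) - g (ts j - \<tau>)) * \<tau> powr (- als j - 1)) \<longlonglongrightarrow> F \<tau>"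
        using tendsto_mult[OF tendsto_diff[OF c1 c2] c3] True tp by (simp add: F_def)
      moreover have "eventually (\<lambda>j. (g (ts j) - g (ts j - \<tau>)) * \<tau> powr (- als j - 1) = s j \<tau>) sequentially"
        using ev by (rule eventually_mono) (use tp in \<open>auto simp: s_def\<close>)
      ultimately show ?thesis by (rule Lim_transform_eventually)
    next
      case False
      then have gt: "rh < \<tau>" using tr by simp
      have ev: "eventually (\<lambda>j. rs j < \<tau>) sequentially"
        by (rule order_tendstoD(2)[OF lr gt])
      have "eventually (\<lambda>j. 0 = s j \<tau>) sequentially"
        using ev by (rule eventually_mono) (auto simp: s_def)
      moreover have "F \<tau> = 0" using gt by (simp add: F_def)
      ultimately show ?thesis using Lim_transform_eventually[OF tendsto_const] by metis
    qed
  qed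
  have "(\<lambda>i. integral\<^sup>L lborel (s (i + N))) \<longlonglongrightarrow> integral\<^sup>L lborel F"
  proof (rule integral_dominated_convergence[where w = w])
    show "F \<in> borel_measurable lborel" using Jl by blast
    show "s (i + N) \<in> borel_measurable lborel" for i using sm .
    show "integrable lborel w" using wi .
    show "AE x in lborel. (\<lambda>i. s (i + N) x) \<longlonglongrightarrow> F x"
      using AE_lborel_singleton[of rh]
      by (rule eventually_mono) (use lim LIMSEQ_ignore_initial_segment in blast)
    show "AE x in lborel. norm (s (i + N) x) \<le> w x" for i
      using bound[of "i + N"] by simp
  qed
  then have "(\<lambda>j. integral\<^sup>L lborel (s j)) \<longlonglongrightarrow> integral\<^sup>L lborel F" by (rule LIMSEQ_offset)
  then have "(\<lambda>j. als j / Gamma (1 - als j) * integral\<^sup>L lborel (s j)) \<longlonglongrightarrow> \<alpha> / Gamma (1 - \<alpha>) * integral\<^sup>L lborel F"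
    by (rule tendsto_mult[OF kl])
  then show ?thesis using Jj Jl by simp
qed

theorem proposition2p4:
  fixes T \<alpha> :: real and g :: "real \<Rightarrow> real"
  assumes "T > 0" and "\<alpha> \<in> {0<..<1}" and "C1_on {0<..T} g"
  shows
    \<comment> \<open>(i)\<close>
    "(\<forall>t\<in>{0<..T}. \<forall>r\<in>{0<..<t}. J_exists \<alpha> r g t)
     \<comment> \<open>(ii),(iii) for upper semicontinuous f\<close>
     \<and> (\<forall>f. usc_on {0..T} f \<longrightarrow>
          (\<forall>t\<in>{0<..T}. \<forall>r\<in>{0<..<t}. K_makes_sense \<alpha> r f t \<and> K_val \<alpha> r f t > -\<infinity>)
        \<and> (\<forall>th\<in>{0<..T}. (\<forall>s\<in>{0<..T}. f s - g s \<le> f th - g th) \<longrightarrow>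
              K_makes_sense \<alpha> 0 f th \<and> K_val \<alpha> 0 f th > -\<infinity>))
     \<comment> \<open>(ii),(iii) for lower semicontinuous f\<close>
     \<and> (\<forall>f. lsc_on {0..T} f \<longrightarrow>
          (\<forall>t\<in>{0<..T}. \<forall>r\<in>{0<..<t}. K_makes_sense \<alpha> r f t \<and> K_val \<alpha> r f t < \<infinity>)
        \<and> (\<forall>th\<in>{0<..T}. (\<forall>s\<in>{0<..T}. f th - g th \<le> f s - g s) \<longrightarrow>
              K_makes_sense \<alpha> 0 f th \<and> K_val \<alpha> 0 f th < \<infinity>))
     \<comment> \<open>(iv)\<close>
     \<and> (\<forall>ts rs als th rh. (\<forall>j. ts j \<in> {0<..T} \<and> rs j \<in> {0<..<ts j} \<and> als j \<in> {0<..<1})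
          \<and> ts \<longlonglongrightarrow> th \<and> rs \<longlonglongrightarrow> rh \<and> als \<longlonglongrightarrow> \<alpha>
          \<and> th \<in> {0<..T} \<and> rh \<in> {0..<th} \<longrightarrow>
          (\<lambda>j. J_val (als j) (rs j) g (ts j)) \<longlonglongrightarrow> J_val \<alpha> rh g th)"
proof -
  have a: "0 < \<alpha>" "\<alpha> < 1" using assms(2) by auto
  note T = assms(1) and g = assms(3)
  have k: "0 < \<alpha> / Gamma (1 - \<alpha>)" using kpos[OF a] .
  have P1: "\<forall>t\<in>{0<..T}. \<forall>r\<in>{0<..<t}. J_exists \<alpha> r g t"
    using J_g(1)[OF a g] by auto
  have P2: "\<forall>f. usc_on {0..T} f \<longrightarrow>
          (\<forall>t\<in>{0<..T}. \<forall>r\<in>{0<..<t}. K_makes_sense \<alpha> r f t \<and> K_val \<alpha> r f t > -\<infinity>)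
        \<and> (\<forall>th\<in>{0<..T}. (\<forall>s\<in>{0<..T}. f s - g s \<le> f th - g th) \<longrightarrow>
              K_makes_sense \<alpha> 0 f th \<and> K_val \<alpha> 0 f th > -\<infinity>)"
    using usc_part[OF T a g] by blast
  have P3: "\<forall>f. lsc_on {0..T} f \<longrightarrow>
          (\<forall>t\<in>{0<..T}. \<forall>r\<in>{0<..<t}. K_makes_sense \<alpha> r f t \<and> K_val \<alpha> r f t < \<infinity>)
        \<and> (\<forall>th\<in>{0<..T}. (\<forall>s\<in>{0<..T}. f th - g th \<le> f s - g s) \<longrightarrow>
              K_makes_sense \<alpha> 0 f th \<and> K_val \<alpha> 0 f th < \<infinity>)"
  proof (intro allI impI)
    fix f :: "real \<Rightarrow> real"
    assume lf: "lsc_on {0..T} f"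
    note U = usc_part[OF T a C1_neg[OF g] lsc_neg[OF lf]]
    have conv: "K_makes_sense \<alpha> r f t \<and> K_val \<alpha> r f t < \<infinity>"
      if "K_makes_sense \<alpha> r (\<lambda>x. - f x) t \<and> K_val \<alpha> r (\<lambda>x. - f x) t > -\<infinity>" for r t
    proof -
      have ms: "K_makes_sense \<alpha> r f t" using that K_neg(1)[OF k, of r f t] by simp
      have "K_val \<alpha> r (\<lambda>x. - f x) t = - K_val \<alpha> r f t" using K_neg(2)[OF k ms] .
      then have "- \<infinity> < - K_val \<alpha> r f t" using that by simp
      then have "K_val \<alpha> r f t < \<infinity>" by (simp add: ereal_uminus_less_reorder)
      then show ?thesis using ms by simp
    qed
    show "(\<forall>t\<in>{0<..T}. \<forall>r\<in>{0<..<t}. K_makes_sense \<alpha> r f t \<and> K_val \<alpha> r f t < \<infinity>)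
        \<and> (\<forall>th\<in>{0<..T}. (\<forall>s\<in>{0<..T}. f th - g th \<le> f s - g s) \<longrightarrow>
              K_makes_sense \<alpha> 0 f th \<and> K_val \<alpha> 0 f th < \<infinity>)"
    proof (rule conjI)
      show "\<forall>t\<in>{0<..T}. \<forall>r\<in>{0<..<t}. K_makes_sense \<alpha> r f t \<and> K_val \<alpha> r f t < \<infinity>"
      proof (intro ballI)
        fix t r assume "t \<in> {0<..T}" "r \<in> {0<..<t}"
        then show "K_makes_sense \<alpha> r f t \<and> K_val \<alpha> r f t < \<infinity>" using U conv by blast
      qed
    next
      show "\<forall>th\<in>{0<..T}. (\<forall>s\<in>{0<..T}. f th - g th \<le> f s - g s) \<longrightarrow>
              K_makes_sense \<alpha> 0 f th \<and> K_val \<alpha> 0 f th < \<infinity>"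
      proof (intro ballI impI)
        fix th assume th: "th \<in> {0<..T}" and mn: "\<forall>s\<in>{0<..T}. f th - g th \<le> f s - g s"
        have "\<forall>s\<in>{0<..T}. - f s - - g s \<le> - f th - - g th" using mn by force
        then show "K_makes_sense \<alpha> 0 f th \<and> K_val \<alpha> 0 f th < \<infinity>" using U conv th by blast
      qed
    qed
  qed
  have P4: "\<forall>ts rs als th rh. (\<forall>j. ts j \<in> {0<..T} \<and> rs j \<in> {0<..<ts j} \<and> als j \<in> {0<..<1})
          \<and> ts \<longlonglongrightarrow> th \<and> rs \<longlonglongrightarrow> rh \<and> als \<longlonglongrightarrow> \<alpha>
          \<and> th \<in> {0<..T} \<and> rh \<in> {0..<th} \<longrightarrow>
          (\<lambda>j. J_val (als j) (rs j) g (ts j)) \<longlonglongrightarrow> J_val \<alpha> rh g th"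
    using part4[OF T a g] by blast
  show ?thesis using P1 P2 P3 P4 by blast
qed

end
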